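(* Let $V$ be a $\mathbb{Z}$-graded vertex algebra such that $V=C_2(V)$, and let $W$ be an irreducible weak $V$-module. Then $W=\widetilde{C}_2(W)$.
   Context: A vertex algebra $(V,Y,\mathbf{1})$ has vertex operators $Y(v,z)=\sum_{n\in\mathbb{Z}}v_nz^{-n-1}$. A $\mathbb{Z}$-graded vertex algebra is a vertex algebra $V=\bigoplus_{n\in\mathbb{Z}}V_n$ with a conformal vector $\omega\in V_2$, $Y(\omega,z)=\sum_n L(n)z^{-n-2}$, whose modes satisfy the Virasoro relations with some central charge, such that $L(0)v=nv$ for $v\in V_n$ and $Y(L(-1)v,z)=\frac{d}{dz}Y(v,z)$. A weak $V$-module is a vector space $M$ with $Y_M(v,z)=\sum_n v_nz^{-n-1}\in(\mathrm{End}\,M)[[z,z^{-1}]]$ such that $u_nw=0$ for $n\gg0$, $Y_M(\mathbf{1},z)=\mathrm{id}_M$, and the Jacobi identity holds; it is irreducible if it has no weak submodules other than $0$ and itself. Define $C_2(V)=\mathrm{Span}_{\mathbb{C}}\{u_{-2}v\mid u,v\in V\}$ and, for a weak $V$-module $M$, $\widetilde{C}_2(M)=\mathrm{Span}_{\mathbb{C}}\{u_{-2}w\mid u\in V,\ w\in M\}$. $V$ (resp. $M$) is called $C_2$-cofinite if $V/C_2(V)$ (resp. $M/\widetilde{C}_2(M)$) is finite-dimensional. *)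

theory Defs
  imports Complex_Main
begin

text \<open>
  Vertex operators are encoded by their modes: Y u n w denotes u_n w,
  i.e. Y(u,z) = sum_n u_n z^(-n-1).
\<close>

definition fsum :: "(nat \<Rightarrow> 'b::comm_monoid_add) \<Rightarrow> 'b" where
  "fsum f = sum f {i. f i \<noteq> 0}"

text \<open>The Jacobi identity, written componentwise (Borcherds identity):
  for all m n l and u v in V, w in M,
  sum_i binom(m,i) (u_(l+i) v)_(m+n-i) w
   = sum_i (-1)^i binom(l,i) (u_(m+l-i) v_(n+i) w - (-1)^l v_(n+l-i) u_(m+i) w).\<close>
definition jacobi ::
  "(complex \<Rightarrow> 'm \<Rightarrow> 'm) \<Rightarrow> ('v \<Rightarrow> int \<Rightarrow> 'v \<Rightarrow> 'v) \<Rightarrow> ('v \<Rightarrow> int \<Rightarrow> 'm \<Rightarrow> 'm::ab_group_add) \<Rightarrow> bool" where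
  "jacobi smulM YV YM \<longleftrightarrow>
    (\<forall>u v w m n l.
      fsum (\<lambda>i::nat. smulM ((of_int m :: complex) gchoose i)
                        (YM (YV u (l + int i) v) (m + n - int i) w))
      = fsum (\<lambda>i::nat. smulM ((-1) ^ i * ((of_int l :: complex) gchoose i))
                        (YM u (m + l - int i) (YM v (n + int i) w)
                         - smulM ((-1) powi l) (YM v (n + l - int i) (YM u (m + int i) w)))))"

definition vertex_algebra ::
  "(complex \<Rightarrow> 'v \<Rightarrow> 'v::ab_group_add) \<Rightarrow> ('v \<Rightarrow> int \<Rightarrow> 'v \<Rightarrow> 'v) \<Rightarrow> 'v \<Rightarrow> bool" where
  "vertex_algebra smul Y vac \<longleftrightarrow>
     vector_space smul \<and>
     (\<forall>u n. Vector_Spaces.linear smul smul (Y u n)) \<and>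
     (\<forall>w n. Vector_Spaces.linear smul smul (\<lambda>u. Y u n w)) \<and>
     (\<forall>u v. \<exists>N. \<forall>n\<ge>N. Y u n v = 0) \<and>
     (\<forall>n w. Y vac n w = (if n = -1 then w else 0)) \<and>
     (\<forall>v n. n \<ge> 0 \<longrightarrow> Y v n vac = 0) \<and>
     (\<forall>v. Y v (-1) vac = v) \<and>
     jacobi smul Y Y"

definition graded_decomp :: "(complex \<Rightarrow> 'v \<Rightarrow> 'v::ab_group_add) \<Rightarrow> (int \<Rightarrow> 'v set) \<Rightarrow> bool" where
  "graded_decomp smul Vn \<longleftrightarrow>
     (\<forall>n. module.subspace smul (Vn n)) \<and>
     (\<forall>v. \<exists>!f. finite {n. f n \<noteq> 0} \<and> (\<forall>n. f n \<in> Vn n) \<and> v = sum f {n. f n \<noteq> 0})"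

text \<open>Z-graded vertex algebra with conformal vector omega in V_2,
  L(n) = omega_(n+1).\<close>
definition Z_graded_VA ::
  "(complex \<Rightarrow> 'v \<Rightarrow> 'v::ab_group_add) \<Rightarrow> ('v \<Rightarrow> int \<Rightarrow> 'v \<Rightarrow> 'v) \<Rightarrow> 'v \<Rightarrow> 'v \<Rightarrow> (int \<Rightarrow> 'v set) \<Rightarrow> bool" where
  "Z_graded_VA smul Y vac \<omega> Vn \<longleftrightarrow>
     vertex_algebra smul Y vac \<and>
     graded_decomp smul Vn \<and>
     \<omega> \<in> Vn 2 \<and>
     (\<exists>c::complex. \<forall>m n v.
        Y \<omega> (m + 1) (Y \<omega> (n + 1) v) - Y \<omega> (n + 1) (Y \<omega> (m + 1) v)
        = smul (of_int (m - n)) (Y \<omega> (m + n + 1) v)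
          + smul ((of_int (m ^ 3 - m) / 12) * (if m + n = 0 then 1 else 0) * c) v) \<and>
     (\<forall>n v. v \<in> Vn n \<longrightarrow> Y \<omega> 1 v = smul (of_int n) v) \<and>
     (\<forall>v n w. Y (Y \<omega> 0 v) n w = smul (- of_int n) (Y v (n - 1) w))"

definition weak_module ::
  "(complex \<Rightarrow> 'v \<Rightarrow> 'v::ab_group_add) \<Rightarrow> ('v \<Rightarrow> int \<Rightarrow> 'v \<Rightarrow> 'v) \<Rightarrow> 'v \<Rightarrow>
   (complex \<Rightarrow> 'm \<Rightarrow> 'm::ab_group_add) \<Rightarrow> ('v \<Rightarrow> int \<Rightarrow> 'm \<Rightarrow> 'm) \<Rightarrow> bool" where
  "weak_module smul Y vac smulM YM \<longleftrightarrow>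
     vector_space smulM \<and>
     (\<forall>u n. Vector_Spaces.linear smulM smulM (YM u n)) \<and>
     (\<forall>w n. Vector_Spaces.linear smul smulM (\<lambda>u. YM u n w)) \<and>
     (\<forall>u w. \<exists>N. \<forall>n\<ge>N. YM u n w = 0) \<and>
     (\<forall>n w. YM vac n w = (if n = -1 then w else 0)) \<and>
     jacobi smulM Y YM"

definition weak_submodule ::
  "(complex \<Rightarrow> 'm \<Rightarrow> 'm::ab_group_add) \<Rightarrow> ('v \<Rightarrow> int \<Rightarrow> 'm \<Rightarrow> 'm) \<Rightarrow> 'm set \<Rightarrow> bool" where
  "weak_submodule smulM YM N \<longleftrightarrow>
     module.subspace smulM N \<and> (\<forall>u n w. w \<in> N \<longrightarrow> YM u n w \<in> N)"

definition irreducible_weak_module ::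
  "(complex \<Rightarrow> 'v \<Rightarrow> 'v::ab_group_add) \<Rightarrow> ('v \<Rightarrow> int \<Rightarrow> 'v \<Rightarrow> 'v) \<Rightarrow> 'v \<Rightarrow>
   (complex \<Rightarrow> 'm \<Rightarrow> 'm::ab_group_add) \<Rightarrow> ('v \<Rightarrow> int \<Rightarrow> 'm \<Rightarrow> 'm) \<Rightarrow> bool" where
  "irreducible_weak_module smul Y vac smulM YM \<longleftrightarrow>
     weak_module smul Y vac smulM YM \<and>
     (\<forall>N. weak_submodule smulM YM N \<longrightarrow> N = {0} \<or> N = UNIV)"

definition C2 :: "(complex \<Rightarrow> 'v \<Rightarrow> 'v::ab_group_add) \<Rightarrow> ('v \<Rightarrow> int \<Rightarrow> 'v \<Rightarrow> 'v) \<Rightarrow> 'v set" where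
  "C2 smul Y = module.span smul {Y u (-2) v | u v. True}"

definition C2_tilde ::
  "(complex \<Rightarrow> 'm \<Rightarrow> 'm::ab_group_add) \<Rightarrow> ('v \<Rightarrow> int \<Rightarrow> 'm \<Rightarrow> 'm) \<Rightarrow> 'm set" where
  "C2_tilde smulM YM = module.span smulM {YM u (-2) w | u w. True}"

end

theory Submission
  imports Defs
begin

lemma fsum_single:
  assumes "\<And>i. i \<noteq> j \<Longrightarrow> f i = 0"
  shows "fsum f = f j"
proof (cases "f j = 0")
  case True
  have "f i = 0" for i using True assms by (cases "i = j") auto
  then have "{i. f i \<noteq> 0} = {}" by simp
  then show ?thesis using True by (simp add: fsum_def)
next
  case False
  then have "{i. f i \<noteq> 0} = {j}" using assms by auto
  then show ?thesis by (simp add: fsum_def)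
qed

lemma gb_neg2: "(-1) ^ j * ((-2::complex) gchoose j) = of_nat (j+1)"
proof -
  have "(-2::complex) gchoose j = (-1) ^ j * ((2 + of_nat j - 1) gchoose j)"
    using gbinomial_minus[of "2::complex" j] by simp
  also have "(2 + of_nat j - 1 :: complex) = of_nat (Suc j)" by simp
  also have "(of_nat (Suc j) :: complex) gchoose j = of_nat (Suc j)"
    using binomial_gbinomial[of "Suc j" j, where 'a=complex] binomial_Suc_n[of j] by (simp only:)
  finally have "(-2::complex) gchoose j = (-1)^j * of_nat (Suc j)" by simp
  then have "(-1) ^ j * ((-2::complex) gchoose j) = ((-1)^j * (-1)^j) * of_nat (Suc j)"
    by (simp add: mult.assoc)
  also have "(-1::complex)^j * (-1)^j = 1" by (simp add: power_mult_distrib[symmetric])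
  finally show ?thesis by simp
qed

lemma fsum_in:
  assumes "module.subspace s S" "module s" "\<And>i. f i \<in> S"
  shows "fsum f \<in> S"
proof (cases "finite {i. f i \<noteq> 0}")
  case True
  show ?thesis unfolding fsum_def by (rule module.subspace_sum[OF assms(2,1)]) (rule assms(3))
next
  case False
  then show ?thesis unfolding fsum_def using module.subspace_0[OF assms(2,1)] by simp
qed

theorem proposition2p13:
  fixes smul :: "complex \<Rightarrow> 'v \<Rightarrow> 'v::ab_group_add"
    and Y :: "'v \<Rightarrow> int \<Rightarrow> 'v \<Rightarrow> 'v"
    and vac \<omega> :: 'v
    and Vn :: "int \<Rightarrow> 'v set"
    and smulM :: "complex \<Rightarrow> 'm \<Rightarrow> 'm::ab_group_add"
    and YM :: "'v \<Rightarrow> int \<Rightarrow> 'm \<Rightarrow> 'm"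
  assumes "Z_graded_VA smul Y vac \<omega> Vn"
    and "C2 smul Y = UNIV"
    and "irreducible_weak_module smul Y vac smulM YM"
  shows "C2_tilde smulM YM = UNIV"
proof -
  have VA: "vertex_algebra smul Y vac" using assms(1) by (simp add: Z_graded_VA_def)
  have VS: "vector_space smul" using VA by (simp add: vertex_algebra_def)
  have WM: "weak_module smul Y vac smulM YM" using assms(3) by (simp add: irreducible_weak_module_def)
  have MS: "vector_space smulM" using WM by (simp add: weak_module_def)
  have LIN: "\<And>w n. Vector_Spaces.linear smul smulM (\<lambda>u. YM u n w)" using WM by (simp add: weak_module_def)
  have VAC: "\<And>n w. YM vac n w = (if n = -1 then w else 0)" using WM by (simp add: weak_module_def)
  have LIN2: "\<And>u n. Vector_Spaces.linear smulM smulM (YM u n)" using WM by (simp add: weak_module_def)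
  have Z: "\<And>u n. YM u n 0 = 0" using LIN2 MS by (simp add: vector_space_pair.linear_0 vector_space_pair_def)
  have J: "jacobi smulM Y YM" using WM by (simp add: weak_module_def)
  interpret M: vector_space smulM by (rule MS)
  interpret V: vector_space smul by (rule VS)
  define C where "C = C2_tilde smulM YM"
  have Csub: "M.subspace C" unfolding C_def C2_tilde_def by simp
  have Cmod: "module smulM" by unfold_locales
  have Cgen: "\<And>u w. YM u (-2) w \<in> C" unfolding C_def C2_tilde_def
    by (rule M.span_base) blast
  have modes: "\<forall>u w. YM u (- int k) w \<in> C" if "k \<ge> 2" for k
    using that
  proof (induction k rule: nat_induct_at_least)
    case base
    then show ?case using Cgen by simp
  next
    case (Suc k)
    show ?case
    proof (intro allI)
      fix u w
      define x where "x = Y u (-2) vac"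
      have E: "fsum (\<lambda>i::nat. smulM ((of_int 0 :: complex) gchoose i)
                        (YM (Y u (-2 + int i) vac) (0 + (- int k) - int i) w))
      = fsum (\<lambda>i::nat. smulM ((-1) ^ i * ((of_int (-2) :: complex) gchoose i))
                        (YM u (0 + -2 - int i) (YM vac (- int k + int i) w)
                         - smulM ((-1) powi (-2)) (YM vac (- int k + -2 - int i) (YM u (0 + int i) w))))"
        using J[unfolded jacobi_def, rule_format, where u=u and v=vac and w=w and m=0 and n="- int k" and l="-2"] .
      have L: "fsum (\<lambda>i::nat. smulM ((of_int 0 :: complex) gchoose i)
                        (YM (Y u (-2 + int i) vac) (0 + (- int k) - int i) w)) = YM x (- int k) w"
        by (subst fsum_single[where j=0]) (auto simp: gbinomial_0_left x_def)
      have R: "fsum (\<lambda>i::nat. smulM ((-1) ^ i * ((of_int (-2) :: complex) gchoose i))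
                        (YM u (0 + -2 - int i) (YM vac (- int k + int i) w)
                         - smulM ((-1) powi (-2)) (YM vac (- int k + -2 - int i) (YM u (0 + int i) w))))
               = smulM (of_nat k) (YM u (- int (Suc k)) w)"
      proof (subst fsum_single[where j="k - 1"])
        fix i :: nat assume "i \<noteq> k - 1"
        then show "smulM ((-1) ^ i * ((of_int (-2) :: complex) gchoose i))
                        (YM u (0 + -2 - int i) (YM vac (- int k + int i) w)
                         - smulM ((-1) powi (-2)) (YM vac (- int k + -2 - int i) (YM u (0 + int i) w))) = 0"
          using Suc.hyps by (auto simp: VAC Z)
      next
        have "(-1) ^ (k-1) * ((of_int (-2) :: complex) gchoose (k-1)) = of_nat k"
          using gb_neg2[of "k-1"] Suc.hyps by simp
        then show "smulM ((-1) ^ (k-1) * ((of_int (-2) :: complex) gchoose (k-1)))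
                        (YM u (0 + -2 - int (k-1)) (YM vac (- int k + int (k-1)) w)
                         - smulM ((-1) powi (-2)) (YM vac (- int k + -2 - int (k-1)) (YM u (0 + int (k-1)) w)))
               = smulM (of_nat k) (YM u (- int (Suc k)) w)"
          using Suc.hyps by (simp add: VAC of_nat_diff)
      qed
      have "YM x (- int k) w \<in> C" using Suc.IH by blast
      then have "smulM (of_nat k) (YM u (- int (Suc k)) w) \<in> C"
        unfolding trans[OF trans[OF R[symmetric] E[symmetric]] L] .
      then have "smulM (inverse (of_nat k)) (smulM (of_nat k) (YM u (- int (Suc k)) w)) \<in> C"
        by (rule M.subspace_scale[OF Csub])
      then show "YM u (- int (Suc k)) w \<in> C" using Suc.hyps by simp
    qed
  qed
  have main: "YM (Y a (-2) b) (-1) w \<in> C" for a b w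
  proof -
    have E: "fsum (\<lambda>i::nat. smulM ((of_int 0 :: complex) gchoose i)
                        (YM (Y a (-2 + int i) b) (0 + (-1) - int i) w))
      = fsum (\<lambda>i::nat. smulM ((-1) ^ i * ((of_int (-2) :: complex) gchoose i))
                        (YM a (0 + -2 - int i) (YM b (-1 + int i) w)
                         - smulM ((-1) powi (-2)) (YM b (-1 + -2 - int i) (YM a (0 + int i) w))))"
      using J[unfolded jacobi_def, rule_format, where u=a and v=b and w=w and m=0 and n="-1" and l="-2"] .
    have L: "fsum (\<lambda>i::nat. smulM ((of_int 0 :: complex) gchoose i)
                        (YM (Y a (-2 + int i) b) (0 + (-1) - int i) w)) = YM (Y a (-2) b) (-1) w"
      by (subst fsum_single[where j=0]) (auto simp: gbinomial_0_left)
    have "fsum (\<lambda>i::nat. smulM ((-1) ^ i * ((of_int (-2) :: complex) gchoose i))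
                        (YM a (0 + -2 - int i) (YM b (-1 + int i) w)
                         - smulM ((-1) powi (-2)) (YM b (-1 + -2 - int i) (YM a (0 + int i) w)))) \<in> C"
    proof (rule fsum_in[OF Csub Cmod])
      fix i :: nat
      have 1: "YM a (0 + -2 - int i) (YM b (-1 + int i) w) \<in> C"
      proof -
        have eq: "(0 + -2 - int i) = - int (i+2)" by simp
        have m: "\<forall>u w. YM u (- int (i+2)) w \<in> C" by (rule modes) simp
        show ?thesis unfolding eq using m by blast
      qed
      have 2: "YM b (-1 + -2 - int i) (YM a (0 + int i) w) \<in> C"
      proof -
        have eq: "(-1 + -2 - int i) = - int (i+3)" by simp
        have m: "\<forall>u w. YM u (- int (i+3)) w \<in> C" by (rule modes) simp
        show ?thesis unfolding eq using m by blast
      qed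
      show "smulM ((-1) ^ i * ((of_int (-2) :: complex) gchoose i))
                        (YM a (0 + -2 - int i) (YM b (-1 + int i) w)
                         - smulM ((-1) powi (-2)) (YM b (-1 + -2 - int i) (YM a (0 + int i) w))) \<in> C"
        by (intro M.subspace_scale[OF Csub] M.subspace_diff[OF Csub] 1 2)
    qed
    then show ?thesis unfolding trans[OF E[symmetric] L] .
  qed
  have "vac \<in> {x. YM x (-1) w \<in> C}" for w
  proof -
    have sub: "V.subspace {x. YM x (-1) w \<in> C}"
      using vector_space_pair.linear_subspace_vimage[OF _ LIN Csub, of "-1" w]
      by (simp add: vector_space_pair_def VS MS vimage_def)
    have "C2 smul Y \<subseteq> {x. YM x (-1) w \<in> C}" unfolding C2_def
      by (rule V.span_minimal[OF _ sub]) (auto intro: main)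
    then show ?thesis using assms(2) by auto
  qed
  then have "YM vac (-1) w \<in> C" for w by blast
  then have "w \<in> C" for w using VAC[of "-1" w] by metis
  then show ?thesis unfolding C_def by auto
qed

end
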